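(* Let $X\sim\mathbb{P}$ on a sample space $\mathcal{X}$, let $G$ be a compact topological group acting on $\mathcal{X}$ with Haar probability measure $\mathbb{Q}$ (exact invariance not assumed). Let $\hat\theta:\mathcal{X}\to\mathbb{R}^p$ be an estimator of $\theta_0\in\mathbb{R}^p$ such that $(x,g)\mapsto\hat\theta(gx)$ is in $L^2(\mathbb{P}\times\mathbb{Q})$, let $\hat\theta_G(X)=\mathbb{E}_{g\sim\mathbb{Q}}\hat\theta(gX)$, and let $\|\hat\theta\|_\infty=\sup_x\|\hat\theta(x)\|_2$. Then $$\big|\mathrm{MSE}(\hat\theta_G)-\mathrm{MSE}(\hat\theta)+\mathbb{E}_X\operatorname{tr}(\mathrm{Cov}_g\hat\theta(gX))\big|\le\Delta,$$ where $$\Delta=\mathbb{E}_g\mathcal{W}_1(\hat\theta(gX),\hat\theta(X))\cdot\Big[\mathbb{E}_g\mathcal{W}_1(\hat\theta(gX),\hat\theta(X))+2\|\mathrm{Bias}(\hat\theta(X))\|_2+4\|\hat\theta\|_\infty\Big].$$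
   Context: $\mathrm{MSE}(T)=\mathbb{E}\|T(X)-\theta_0\|_2^2$ and $\mathrm{Bias}(T(X))=\mathbb{E}T(X)-\theta_0$. For fixed $g$, $\mathcal{W}_1(\hat\theta(gX),\hat\theta(X))$ is the Wasserstein-1 distance (with respect to the Euclidean metric) between the laws of $\hat\theta(gX)$ and $\hat\theta(X)$, $X\sim\mathbb{P}$; $\mathbb{E}_g$, $\mathrm{Cov}_g$ are over $g\sim\mathbb{Q}$. *)

theory Defs
  imports "HOL-Analysis.Analysis" "HOL-Probability.Probability"
begin

definition haar_prob :: "'g::{topological_group_add, t2_space} measure \<Rightarrow> bool" where
  "haar_prob Q \<longleftrightarrow> prob_space Q \<and> sets Q = sets borel \<and>
     (\<forall>g. distr Q Q (\<lambda>h. g + h) = Q) \<and>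
     (\<forall>A\<in>sets Q. emeasure Q A = (INF U\<in>{U. open U \<and> A \<subseteq> U}. emeasure Q U)) \<and>
     (\<forall>U. open U \<longrightarrow> emeasure Q U = (SUP K\<in>{K. compact K \<and> K \<subseteq> U}. emeasure Q K))"

definition group_action :: "('g::group_add \<Rightarrow> 'x \<Rightarrow> 'x) \<Rightarrow> 'x set \<Rightarrow> bool" where
  "group_action act S \<longleftrightarrow> (\<forall>g x. x \<in> S \<longrightarrow> act g x \<in> S) \<and>
     (\<forall>x\<in>S. act 0 x = x) \<and> (\<forall>g h x. x \<in> S \<longrightarrow> act (g + h) x = act g (act h x))"

definition couplings :: "'a measure \<Rightarrow> 'a measure \<Rightarrow> ('a \<times> 'a) measure set" where
  "couplings \<mu> \<nu> = {\<pi>. prob_space \<pi> \<and> sets \<pi> = sets (\<mu> \<Otimes>\<^sub>M \<nu>) \<and>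
       distr \<pi> \<mu> fst = \<mu> \<and> distr \<pi> \<nu> snd = \<nu>}"

definition wasserstein1 :: "'a::metric_space measure \<Rightarrow> 'a measure \<Rightarrow> ennreal" where
  "wasserstein1 \<mu> \<nu> = (INF \<pi>\<in>couplings \<mu> \<nu>. \<integral>\<^sup>+ z. ennreal (dist (fst z) (snd z)) \<partial>\<pi>)"

definition law :: "'w measure \<Rightarrow> ('w \<Rightarrow> 'a::topological_space) \<Rightarrow> 'a measure" where
  "law M Y = distr M borel Y"

definition cov_matrix :: "'w measure \<Rightarrow> ('w \<Rightarrow> real^'n) \<Rightarrow> real^'n^'n" where
  "cov_matrix M Y = (\<chi> i j. \<integral>w. (Y w $ i - (\<integral>w'. Y w' \<partial>M) $ i) *
                                   (Y w $ j - (\<integral>w'. Y w' \<partial>M) $ j) \<partial>M)"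

definition mat_trace :: "real^'n^'n \<Rightarrow> real" where
  "mat_trace A = (\<Sum>i\<in>UNIV. A $ i $ i)"

definition MSE :: "'x measure \<Rightarrow> ('x \<Rightarrow> real^'p) \<Rightarrow> real^'p \<Rightarrow> real" where
  "MSE M T \<theta>0 = (\<integral>x. (norm (T x - \<theta>0))^2 \<partial>M)"

definition Bias :: "'x measure \<Rightarrow> ('x \<Rightarrow> real^'p) \<Rightarrow> real^'p \<Rightarrow> real^'p" where
  "Bias M T \<theta>0 = (\<integral>x. T x \<partial>M) - \<theta>0"

definition sup_norm :: "'x set \<Rightarrow> ('x \<Rightarrow> real^'p) \<Rightarrow> ennreal" where
  "sup_norm S T = (SUP x\<in>S. ennreal (norm (T x)))"

end

theory Submission
  imports Defs
begin

lemma coupling_le: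
  fixes \<mu> \<nu> :: "(real^'p) measure" and f :: "real^'p \<Rightarrow> real"
  assumes pi: "\<pi> \<in> couplings \<mu> \<nu>" and smu: "sets \<mu> = sets borel" and snu: "sets \<nu> = sets borel"
    and f: "f \<in> borel_measurable borel" and fpos: "\<And>x. f x \<ge> 0"
    and K: "K \<in> sets borel" and Kmu: "AE x in \<mu>. x \<in> K" and Knu: "AE x in \<nu>. x \<in> K"
    and Lip: "\<And>a b. a \<in> K \<Longrightarrow> b \<in> K \<Longrightarrow> f a \<le> f b + L * dist a b" and L: "L \<ge> 0"
  shows "(\<integral>\<^sup>+x. f x \<partial>\<mu>) \<le> (\<integral>\<^sup>+x. f x \<partial>\<nu>) + ennreal L * (\<integral>\<^sup>+z. ennreal (dist (fst z) (snd z)) \<partial>\<pi>)"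
    and "(\<integral>\<^sup>+x. f x \<partial>\<nu>) \<le> (\<integral>\<^sup>+x. f x \<partial>\<mu>) + ennreal L * (\<integral>\<^sup>+z. ennreal (dist (fst z) (snd z)) \<partial>\<pi>)"
proof -
  from pi have sp: "sets \<pi> = sets (\<mu> \<Otimes>\<^sub>M \<nu>)" and dmu: "distr \<pi> \<mu> fst = \<mu>" and dnu: "distr \<pi> \<nu> snd = \<nu>"
    unfolding couplings_def by auto
  have fstm: "fst \<in> measurable \<pi> \<mu>"
    using measurable_fst measurable_cong_sets[OF sp refl] by blast
  have sndm: "snd \<in> measurable \<pi> \<nu>"
    using measurable_snd measurable_cong_sets[OF sp refl] by blast
  have fstb: "fst \<in> borel_measurable \<pi>"
    using fstm measurable_cong_sets[OF refl smu] by blast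
  have sndb: "snd \<in> borel_measurable \<pi>"
    using sndm measurable_cong_sets[OF refl snu] by blast
  have dm: "(\<lambda>z. dist (fst z) (snd z)) \<in> borel_measurable \<pi>"
    using fstb sndb by (rule borel_measurable_dist)
  have f1: "(\<lambda>z. f (fst z)) \<in> borel_measurable \<pi>"
    using measurable_comp[OF fstb f] by (simp add: comp_def)
  have f2: "(\<lambda>z. f (snd z)) \<in> borel_measurable \<pi>"
    using measurable_comp[OF sndb f] by (simp add: comp_def)
  have fm: "f \<in> borel_measurable \<mu>" using f measurable_cong_sets[OF smu refl] by blast
  have fn: "f \<in> borel_measurable \<nu>" using f measurable_cong_sets[OF snu refl] by blast
  have KM: "K \<in> sets \<mu>" using K smu by simp
  have KN: "K \<in> sets \<nu>" using K snu by simp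
  have Ks: "{x \<in> space \<mu>. x \<in> K} \<in> sets \<mu>"
    using sets.Int[OF sets.top[of \<mu>] KM] by (simp add: Int_def)
  have Ks2: "{x \<in> space \<nu>. x \<in> K} \<in> sets \<nu>"
    using sets.Int[OF sets.top[of \<nu>] KN] by (simp add: Int_def)
  have "(AE z in \<pi>. fst z \<in> K) = (AE x in distr \<pi> \<mu> fst. x \<in> K)"
    by (rule AE_distr_iff[OF fstm Ks, symmetric])
  also have "\<dots> = (AE x in \<mu>. x \<in> K)" by (simp only: dmu)
  finally have AE1: "AE z in \<pi>. fst z \<in> K" using Kmu by simp
  have "(AE z in \<pi>. snd z \<in> K) = (AE x in distr \<pi> \<nu> snd. x \<in> K)"
    by (rule AE_distr_iff[OF sndm Ks2, symmetric])
  also have "\<dots> = (AE x in \<nu>. x \<in> K)" by (simp only: dnu)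
  finally have AE2: "AE z in \<pi>. snd z \<in> K" using Knu by simp
  have I1: "(\<integral>\<^sup>+x. f x \<partial>\<mu>) = (\<integral>\<^sup>+z. f (fst z) \<partial>\<pi>)"
    using nn_integral_distr[OF fstm, of "\<lambda>x. ennreal (f x)"] dmu fm by simp
  have I2: "(\<integral>\<^sup>+x. f x \<partial>\<nu>) = (\<integral>\<^sup>+z. f (snd z) \<partial>\<pi>)"
    using nn_integral_distr[OF sndm, of "\<lambda>x. ennreal (f x)"] dnu fn by simp
  have "(\<integral>\<^sup>+z. f (fst z) \<partial>\<pi>) \<le> (\<integral>\<^sup>+z. ennreal (f (snd z)) + ennreal L * ennreal (dist (fst z) (snd z)) \<partial>\<pi>)"
  proof (rule nn_integral_mono_AE)
    show "AE z in \<pi>. ennreal (f (fst z)) \<le> ennreal (f (snd z)) + ennreal L * ennreal (dist (fst z) (snd z))"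
      using AE1 AE2
    proof eventually_elim
      case (elim z)
      then have "ennreal (f (fst z)) \<le> ennreal (f (snd z) + L * dist (fst z) (snd z))" using Lip by (intro ennreal_leI) blast
      also have "\<dots> = ennreal (f (snd z)) + ennreal L * ennreal (dist (fst z) (snd z))"
        using fpos L by (simp add: ennreal_plus ennreal_mult)
      finally show ?case .
    qed
  qed
  also have "\<dots> = (\<integral>\<^sup>+z. f (snd z) \<partial>\<pi>) + ennreal L * (\<integral>\<^sup>+z. ennreal (dist (fst z) (snd z)) \<partial>\<pi>)"
    using f2 dm by (simp add: nn_integral_add nn_integral_cmult)
  finally show "(\<integral>\<^sup>+x. f x \<partial>\<mu>) \<le> (\<integral>\<^sup>+x. f x \<partial>\<nu>) + ennreal L * (\<integral>\<^sup>+z. ennreal (dist (fst z) (snd z)) \<partial>\<pi>)"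
    using I1 I2 by simp
  have "(\<integral>\<^sup>+z. f (snd z) \<partial>\<pi>) \<le> (\<integral>\<^sup>+z. ennreal (f (fst z)) + ennreal L * ennreal (dist (fst z) (snd z)) \<partial>\<pi>)"
  proof (rule nn_integral_mono_AE)
    show "AE z in \<pi>. ennreal (f (snd z)) \<le> ennreal (f (fst z)) + ennreal L * ennreal (dist (fst z) (snd z))"
      using AE1 AE2
    proof eventually_elim
      case (elim z)
      then have "f (snd z) \<le> f (fst z) + L * dist (fst z) (snd z)" using Lip[of "snd z" "fst z"] by (simp add: dist_commute)
      then have "ennreal (f (snd z)) \<le> ennreal (f (fst z) + L * dist (fst z) (snd z))" by (rule ennreal_leI)
      also have "\<dots> = ennreal (f (fst z)) + ennreal L * ennreal (dist (fst z) (snd z))"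
        using fpos L by (simp add: ennreal_plus ennreal_mult)
      finally show ?case .
    qed
  qed
  also have "\<dots> = (\<integral>\<^sup>+z. f (fst z) \<partial>\<pi>) + ennreal L * (\<integral>\<^sup>+z. ennreal (dist (fst z) (snd z)) \<partial>\<pi>)"
    using f1 dm by (simp add: nn_integral_add nn_integral_cmult)
  finally show "(\<integral>\<^sup>+x. f x \<partial>\<nu>) \<le> (\<integral>\<^sup>+x. f x \<partial>\<mu>) + ennreal L * (\<integral>\<^sup>+z. ennreal (dist (fst z) (snd z)) \<partial>\<pi>)"
    using I1 I2 by simp
qed

lemma couplings_nonempty:
  assumes "prob_space \<mu>" "prob_space \<nu>"
  shows "\<mu> \<Otimes>\<^sub>M \<nu> \<in> couplings \<mu> \<nu>"
proof -
  interpret pair_prob_space \<mu> \<nu> using assms by (simp add: pair_prob_space_def pair_sigma_finite_def prob_space_imp_sigma_finite)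
  have "distr (\<mu> \<Otimes>\<^sub>M \<nu>) \<nu> snd = \<nu>"
  proof (intro measure_eqI)
    fix A assume A: "A \<in> sets (distr (\<mu> \<Otimes>\<^sub>M \<nu>) \<nu> snd)"
    then have A': "A \<in> sets \<nu>" by simp
    have "emeasure (distr (\<mu> \<Otimes>\<^sub>M \<nu>) \<nu> snd) A = emeasure (\<mu> \<Otimes>\<^sub>M \<nu>) (space \<mu> \<times> A)"
      using A' by (auto simp add: emeasure_distr space_pair_measure dest: sets.sets_into_space intro!: arg_cong2[where f=emeasure])
    also have "\<dots> = emeasure \<nu> A"
      using A' by (simp add: M2.emeasure_pair_measure_Times[OF sets.top A'] M1.emeasure_space_1)
    finally show "emeasure (distr (\<mu> \<Otimes>\<^sub>M \<nu>) \<nu> snd) A = emeasure \<nu> A" .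
  qed simp
  then show ?thesis unfolding couplings_def
    using prob_space_pair[OF assms] M2.distr_pair_fst by simp
qed


lemma abs_le_1_sq: "\<bar>t::real\<bar> \<le> 1 + t^2"
proof (cases "\<bar>t\<bar> \<le> 1")
  case True then show ?thesis using zero_le_power2[of t] by linarith
next
  case False
  then have "\<bar>t\<bar> * 1 \<le> \<bar>t\<bar> * \<bar>t\<bar>" by (intro mult_left_mono) auto
  moreover have "\<bar>t\<bar> * \<bar>t\<bar> = t^2" by (simp add: power2_eq_square abs_mult_self_eq)
  ultimately show ?thesis by linarith
qed

lemma var_scalar:
  fixes f :: "'a \<Rightarrow> real"
  assumes Q: "prob_space Q" and fm: "f \<in> borel_measurable Q" and f2: "integrable Q (\<lambda>x. (f x)^2)"
  shows "integrable Q f"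
    and "(\<integral>x. (f x - c)^2 \<partial>Q) = ((\<integral>x. f x \<partial>Q) - c)^2 + (\<integral>x. (f x - (\<integral>x. f x \<partial>Q)) * (f x - (\<integral>x. f x \<partial>Q)) \<partial>Q)"
proof -
  interpret prob_space Q by fact
  have i1: "integrable Q (\<lambda>x. 1 + (f x)^2)" using f2 by simp
  show fi: "integrable Q f"
  proof (rule Bochner_Integration.integrable_bound[OF i1 fm], rule AE_I2)
    fix x
    have "\<bar>f x\<bar> \<le> 1 + (f x)^2" by (rule abs_le_1_sq)
    then show "norm (f x) \<le> norm (1 + (f x)^2)" by simp
  qed
  define m where "m = (\<integral>x. f x \<partial>Q)"
  have e1: "(\<lambda>x. (f x - c)^2) = (\<lambda>x. (f x)^2 - 2 * c * f x + c^2)"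
    by (auto simp: power2_eq_square algebra_simps)
  have e2: "(\<lambda>x. (f x - m) * (f x - m)) = (\<lambda>x. (f x)^2 - 2 * m * f x + m^2)"
    by (auto simp: power2_eq_square algebra_simps)
  have gen: "(\<integral>x. (f x)^2 - 2 * d * f x + d^2 \<partial>Q) = (\<integral>x. (f x)^2 \<partial>Q) - 2 * d * m + d^2" for d
  proof -
    have i3: "integrable Q (\<lambda>x. 2 * d * f x)" using fi by (rule Bochner_Integration.integrable_mult_right)
    have i4: "integrable Q (\<lambda>x. (f x)^2 - 2 * d * f x)" using f2 i3 by (rule Bochner_Integration.integrable_diff)
    have "(\<integral>x. (f x)^2 - 2 * d * f x + d^2 \<partial>Q) = (\<integral>x. (f x)^2 - 2 * d * f x \<partial>Q) + (\<integral>x. d^2 \<partial>Q)"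
      using i4 integrable_const by (rule Bochner_Integration.integral_add)
    also have "(\<integral>x. (f x)^2 - 2 * d * f x \<partial>Q) = (\<integral>x. (f x)^2 \<partial>Q) - (\<integral>x. 2 * d * f x \<partial>Q)"
      using f2 i3 by (rule Bochner_Integration.integral_diff)
    also have "(\<integral>x. 2 * d * f x \<partial>Q) = 2 * d * m"
      unfolding m_def by (rule Bochner_Integration.integral_mult_right_zero)
    also have "(\<integral>x. d^2 \<partial>Q) = d^2"
      by (simp add: prob_space)
    finally show ?thesis .
  qed
  have "(\<integral>x. (f x - c)^2 \<partial>Q) = (\<integral>x. (f x)^2 \<partial>Q) - 2 * c * m + c^2"
    unfolding e1 by (rule gen)
  moreover have "(\<integral>x. (f x - m) * (f x - m) \<partial>Q) = (\<integral>x. (f x)^2 \<partial>Q) - 2 * m * m + m^2"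
    unfolding e2 by (rule gen)
  ultimately show "(\<integral>x. (f x - c)^2 \<partial>Q) = ((\<integral>x. f x \<partial>Q) - c)^2 + (\<integral>x. (f x - (\<integral>x. f x \<partial>Q)) * (f x - (\<integral>x. f x \<partial>Q)) \<partial>Q)"
    unfolding m_def[symmetric] by (simp add: power2_eq_square algebra_simps)
qed

lemma norm2_vec: "(norm (v :: real^'p))^2 = (\<Sum>i\<in>UNIV. (v$i)^2)"
  unfolding norm_vec_def L2_set_def by (simp add: sum_nonneg)

lemma vec_nth_meas:
  fixes Y :: "'a \<Rightarrow> real^'p"
  assumes "Y \<in> borel_measurable M" shows "(\<lambda>g. Y g $ i) \<in> borel_measurable M"
proof -
  have "(\<lambda>v::real^'p. v$i) \<in> borel_measurable borel"
    by (intro borel_measurable_continuous_onI linear_continuous_on bounded_linear_vec_nth)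
  from measurable_comp[OF assms this] show ?thesis by (simp add: comp_def)
qed

lemma var_decomp:
  fixes Y :: "'g \<Rightarrow> real^'p"
  assumes Q: "prob_space Q" and Ym: "Y \<in> borel_measurable Q" and Y2: "integrable Q (\<lambda>g. (norm (Y g))^2)"
  shows "(\<integral>g. (norm (Y g - c))^2 \<partial>Q) = (norm ((\<integral>g. Y g \<partial>Q) - c))^2 + mat_trace (cov_matrix Q Y)"
proof -
  interpret prob_space Q by fact
  have cm: "(\<lambda>g. Y g $ i) \<in> borel_measurable Q" for i using Ym by (rule vec_nth_meas)
  have c2: "integrable Q (\<lambda>g. (Y g $ i)^2)" for i
  proof (rule Bochner_Integration.integrable_bound[OF Y2])
    show "(\<lambda>g. (Y g $ i)^2) \<in> borel_measurable Q" using cm[of i] by measurable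
    show "AE g in Q. norm ((Y g $ i)^2) \<le> norm ((norm (Y g))^2)"
    proof (rule AE_I2)
    fix g
    have "(Y g $ i)^2 \<le> (norm (Y g))^2"
      using component_le_norm_cart[of "Y g" i] by (metis abs_norm_cancel abs_le_square_iff real_norm_def norm_ge_zero order_trans abs_ge_self)
    then show "norm ((Y g $ i)^2) \<le> norm ((norm (Y g))^2)" by simp
  qed
  qed
  have ci: "integrable Q (\<lambda>g. Y g $ i)" for i using var_scalar(1)[OF Q cm c2] .
  have Yi: "integrable Q Y"
  proof (rule Bochner_Integration.integrable_bound[of _ "\<lambda>g. 1 + (norm (Y g))^2"])
    show "integrable Q (\<lambda>g. 1 + (norm (Y g))^2)" using Y2 by simp
    show "Y \<in> borel_measurable Q" by fact
    show "AE x in Q. norm (Y x) \<le> norm (1 + (norm (Y x))^2)"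
    proof (rule AE_I2)
      fix x
      have "norm (Y x) \<le> 1 + (norm (Y x))^2" using abs_le_1_sq[of "norm (Y x)"] by simp
      then show "norm (Y x) \<le> norm (1 + (norm (Y x))^2)" by simp
    qed
  qed
  have comp: "(\<integral>g. Y g \<partial>Q) $ i = (\<integral>g. Y g $ i \<partial>Q)" for i
    using integral_bounded_linear[OF bounded_linear_vec_nth Yi, of i] by simp
  have "(\<integral>g. (norm (Y g - c))^2 \<partial>Q) = (\<integral>g. (\<Sum>i\<in>UNIV. (Y g $ i - c $ i)^2) \<partial>Q)"
    by (simp add: norm2_vec)
  also have "\<dots> = (\<Sum>i\<in>UNIV. (\<integral>g. (Y g $ i - c $ i)^2 \<partial>Q))"
  proof -
    have ii: "integrable Q (\<lambda>g. (Y g $ i - c $ i)^2)" for i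
    proof -
      have "integrable Q (\<lambda>g. (Y g $ i)^2 - 2 * c$i * Y g $ i + (c$i)^2)"
        by (intro Bochner_Integration.integrable_add Bochner_Integration.integrable_diff Bochner_Integration.integrable_mult_right c2 ci integrable_const)
      moreover have "(\<lambda>g. (Y g $ i)^2 - 2 * c$i * Y g $ i + (c$i)^2) = (\<lambda>g. (Y g $ i - c $ i)^2)"
        by (auto simp: power2_eq_square algebra_simps)
      ultimately show ?thesis by simp
    qed
    show ?thesis by (rule Bochner_Integration.integral_sum) (rule ii)
  qed
  also have "\<dots> = (\<Sum>i\<in>UNIV. ((\<integral>g. Y g $ i \<partial>Q) - c$i)^2 + (\<integral>g. (Y g $ i - (\<integral>g. Y g $ i \<partial>Q)) * (Y g $ i - (\<integral>g. Y g $ i \<partial>Q)) \<partial>Q))"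
    by (rule sum.cong[OF refl], rule var_scalar(2)[OF Q cm c2])
  also have "\<dots> = (norm ((\<integral>g. Y g \<partial>Q) - c))^2 + mat_trace (cov_matrix Q Y)"
  proof -
    have t: "mat_trace (cov_matrix Q Y) = (\<Sum>i\<in>UNIV. (\<integral>g. (Y g $ i - (\<integral>g. Y g $ i \<partial>Q)) * (Y g $ i - (\<integral>g. Y g $ i \<partial>Q)) \<partial>Q))"
      unfolding mat_trace_def cov_matrix_def by (simp only: vec_lambda_beta comp)
    have n: "(norm ((\<integral>g. Y g \<partial>Q) - c))^2 = (\<Sum>i\<in>UNIV. ((\<integral>g. Y g $ i \<partial>Q) - c$i)^2)"
      unfolding norm2_vec by (simp only: vector_minus_component comp)
    show ?thesis unfolding t n by (rule sum.distrib)
  qed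
  finally show ?thesis .
qed


lemma ennreal_absdiff:
  fixes a c L t :: real
  assumes "ennreal a \<le> ennreal c + ennreal L * z" "ennreal c \<le> ennreal a + ennreal L * z"
    and "a \<ge> 0" "c \<ge> 0" "L > 0"
  shows "ennreal (\<bar>a - c\<bar> / L) \<le> z"
proof (cases z)
  case (real t)
  then have t: "z = ennreal t" "t \<ge> 0" by auto
  have Lt: "L * t \<ge> 0" using t assms(5) by simp
  have e1: "ennreal c + ennreal L * z = ennreal (c + L * t)"
    using t assms(4,5) Lt by (simp add: ennreal_plus ennreal_mult)
  have e2: "ennreal a + ennreal L * z = ennreal (a + L * t)"
    using t assms(3,5) Lt by (simp add: ennreal_plus ennreal_mult)
  have "ennreal a \<le> ennreal (c + L * t)" using assms(1) e1 by simp
  moreover have "0 \<le> c + L * t" using assms(4) Lt by simp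
  ultimately have 1: "a \<le> c + L * t" using ennreal_le_iff by blast
  have "ennreal c \<le> ennreal (a + L * t)" using assms(2) e2 by simp
  moreover have "0 \<le> a + L * t" using assms(3) Lt by simp
  ultimately have 2: "c \<le> a + L * t" using ennreal_le_iff by blast
  have "\<bar>a - c\<bar> / L \<le> t" using 1 2 assms(5) by (simp add: divide_le_eq abs_le_iff algebra_simps)
  then show ?thesis using t by (simp add: ennreal_leI)
next
  case top then show ?thesis by simp
qed

lemma W_bound:
  fixes \<mu> \<nu> :: "(real^'p) measure" and f :: "real^'p \<Rightarrow> real"
  assumes pm: "prob_space \<mu>" and pn: "prob_space \<nu>"
    and smu: "sets \<mu> = sets borel" and snu: "sets \<nu> = sets borel"
    and f: "f \<in> borel_measurable borel" and fpos: "\<And>x. f x \<ge> 0"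
    and K: "K \<in> sets borel" and Kmu: "AE x in \<mu>. x \<in> K" and Knu: "AE x in \<nu>. x \<in> K"
    and Lip: "\<And>a b. a \<in> K \<Longrightarrow> b \<in> K \<Longrightarrow> f a \<le> f b + L * dist a b" and L: "L \<ge> 0"
    and fin1: "(\<integral>\<^sup>+x. f x \<partial>\<mu>) = ennreal a" and fin2: "(\<integral>\<^sup>+x. f x \<partial>\<nu>) = ennreal c"
    and a: "a \<ge> 0" and c: "c \<ge> 0"
  shows "ennreal \<bar>a - c\<bar> \<le> ennreal L * wasserstein1 \<mu> \<nu>"
    and "L > 0 \<Longrightarrow> ennreal (\<bar>a - c\<bar> / L) \<le> wasserstein1 \<mu> \<nu>"
proof -
  have key: "ennreal a \<le> ennreal c + ennreal L * (\<integral>\<^sup>+z. ennreal (dist (fst z) (snd z)) \<partial>\<pi>)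
     \<and> ennreal c \<le> ennreal a + ennreal L * (\<integral>\<^sup>+z. ennreal (dist (fst z) (snd z)) \<partial>\<pi>)"
    if "\<pi> \<in> couplings \<mu> \<nu>" for \<pi>
    using coupling_le[OF that smu snu f fpos K Kmu Knu Lip L] fin1 fin2 by simp
  show pos: "ennreal (\<bar>a - c\<bar> / L) \<le> wasserstein1 \<mu> \<nu>" if "L > 0"
    unfolding wasserstein1_def
  proof (rule INF_greatest)
    fix \<pi> assume "\<pi> \<in> couplings \<mu> \<nu>"
    from key[OF this] show "ennreal (\<bar>a - c\<bar> / L) \<le> (\<integral>\<^sup>+z. ennreal (dist (fst z) (snd z)) \<partial>\<pi>)"
      using ennreal_absdiff a c that by blast
  qed
  show "ennreal \<bar>a - c\<bar> \<le> ennreal L * wasserstein1 \<mu> \<nu>"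
  proof (cases "L = 0")
    case True
    from key[OF couplings_nonempty[OF pm pn]] True have "a \<le> c" "c \<le> a"
      using a c by (simp_all add: ennreal_le_iff)
    then show ?thesis by simp
  next
    case False
    then have Lp: "L > 0" using L by simp
    have "ennreal \<bar>a - c\<bar> = ennreal L * ennreal (\<bar>a - c\<bar> / L)"
      using Lp by (subst ennreal_mult[symmetric]) auto
    also have "\<dots> \<le> ennreal L * wasserstein1 \<mu> \<nu>"
      by (rule mult_left_mono[OF pos[OF Lp]]) simp
    finally show ?thesis .
  qed
qed


lemma meas_cont:
  fixes h :: "'a::topological_space \<Rightarrow> 'b::topological_space"
  assumes "continuous_on UNIV h" "T \<in> borel_measurable M"
  shows "(\<lambda>x. h (T x)) \<in> borel_measurable M"
  using measurable_comp[OF assms(2) borel_measurable_continuous_onI[OF assms(1)]] by (simp add: comp_def)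

lemma sq_bound: "(norm (a - c :: real^'p))^2 \<le> 2 * (norm a)^2 + 2 * (norm c)^2"
proof -
  have "norm (a - c) \<le> norm a + norm c" by (rule norm_triangle_ineq4)
  then have "(norm (a - c))^2 \<le> (norm a + norm c)^2" by (simp add: power_mono)
  also have "\<dots> \<le> 2 * (norm a)^2 + 2 * (norm c)^2"
    using zero_le_power2[of "norm a - norm c"] unfolding power2_diff power2_sum by linarith
  finally show ?thesis .
qed

lemma lip_sq:
  fixes a b' m t :: "real^'p"
  assumes "norm a \<le> B" "norm b' \<le> B" "norm m \<le> B"
  shows "(norm (a - t))^2 \<le> (norm (b' - t))^2 + (4 * B + 2 * norm (m - t)) * dist a b'"
proof -
  have ha: "norm (a - t) \<le> 2 * B + norm (m - t)"
    using norm_triangle_ineq[of "a - m" "m - t"] norm_triangle_ineq4[of a m] assms by simp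
  have hb: "norm (b' - t) \<le> 2 * B + norm (m - t)"
    using norm_triangle_ineq[of "b' - m" "m - t"] norm_triangle_ineq4[of b' m] assms by simp
  have d: "norm (a - t) - norm (b' - t) \<le> dist a b'"
    using norm_triangle_ineq3[of "a - t" "b' - t"] by (simp add: dist_norm)
  have "(norm (a - t))^2 - (norm (b' - t))^2 = (norm (a - t) - norm (b' - t)) * (norm (a - t) + norm (b' - t))"
    by (simp add: power2_eq_square algebra_simps)
  also have "\<dots> \<le> dist a b' * (4 * B + 2 * norm (m - t))"
  proof (cases "norm (a - t) - norm (b' - t) \<ge> 0")
    case True
    then show ?thesis using d ha hb
      by (intro mult_mono) auto
  next
    case False
    then have "(norm (a - t) - norm (b' - t)) * (norm (a - t) + norm (b' - t)) \<le> 0"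
      by (intro mult_nonpos_nonneg) auto
    moreover have "0 \<le> 4 * B + 2 * norm (m - t)"
      using assms(1) norm_ge_zero[of a] norm_ge_zero[of "m - t"] by linarith
    then have "0 \<le> dist a b' * (4 * B + 2 * norm (m - t))"
      by (intro mult_nonneg_nonneg) auto
    ultimately show ?thesis by linarith
  qed
  finally show ?thesis by (simp add: algebra_simps)
qed

lemma lip_trunc:
  fixes a b t :: "real^'p"
  assumes R: "R \<ge> 0"
  shows "(min (norm (a - t)) R)^2 \<le> (min (norm (b - t)) R)^2 + (2 * R) * dist a b"
proof -
  define u where "u = min (norm (a - t)) R"
  define v where "v = min (norm (b - t)) R"
  have u: "0 \<le> u" "u \<le> R" and v: "0 \<le> v" "v \<le> R" using R by (auto simp: u_def v_def)
  have "\<bar>norm (a - t) - norm (b - t)\<bar> \<le> dist a b"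
    using norm_triangle_ineq3[of "a - t" "b - t"] by (simp add: dist_norm)
  then have d: "u - v \<le> dist a b" unfolding u_def v_def by linarith
  have "u^2 - v^2 = (u - v) * (u + v)" by (simp add: power2_eq_square algebra_simps)
  also have "\<dots> \<le> dist a b * (2 * R)"
  proof (cases "u - v \<ge> 0")
    case True then show ?thesis using d u v by (intro mult_mono) auto
  next
    case False
    then have "(u - v) * (u + v) \<le> 0" using u v by (intro mult_nonpos_nonneg) auto
    moreover have "0 \<le> dist a b * (2 * R)" using R by simp
    ultimately show ?thesis by linarith
  qed
  finally show ?thesis unfolding u_def v_def by (simp add: algebra_simps)
qed

lemma trunc_sup:
  fixes u :: real assumes "u \<ge> 0"
  shows "(SUP n. ennreal ((min u (real (Suc n)))^2)) = ennreal (u^2)"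
proof (rule antisym)
  show "(SUP n. ennreal ((min u (real (Suc n)))^2)) \<le> ennreal (u^2)"
    using assms by (intro SUP_least ennreal_leI power_mono) auto
  obtain n where "u \<le> real (Suc n)"
    by (metis real_arch_simple le_SucI of_nat_le_iff order_trans)
  then have "ennreal (u^2) = ennreal ((min u (real (Suc n)))^2)" by simp
  also have "\<dots> \<le> (SUP n. ennreal ((min u (real (Suc n)))^2))" by (rule SUP_upper) simp
  finally show "ennreal (u^2) \<le> (SUP n. ennreal ((min u (real (Suc n)))^2))" .
qed

lemma trunc_MCT:
  fixes u :: "'a \<Rightarrow> real"
  assumes um: "u \<in> borel_measurable M" and upos: "\<And>x. u x \<ge> 0"
  shows "(\<integral>\<^sup>+x. ennreal ((u x)^2) \<partial>M) = (SUP n. \<integral>\<^sup>+x. ennreal ((min (u x) (real (Suc n)))^2) \<partial>M)"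
proof -
  have "(\<integral>\<^sup>+x. ennreal ((u x)^2) \<partial>M) = (\<integral>\<^sup>+x. (SUP n. ennreal ((min (u x) (real (Suc n)))^2)) \<partial>M)"
    using trunc_sup[OF upos] by simp
  also have "\<dots> = (SUP n. \<integral>\<^sup>+x. ennreal ((min (u x) (real (Suc n)))^2) \<partial>M)"
  proof (rule nn_integral_monotone_convergence_SUP)
    show "incseq (\<lambda>n x. ennreal ((min (u x) (real (Suc n)))^2))"
      using upos by (auto simp: incseq_def le_fun_def intro!: ennreal_leI power_mono)
    show "(\<lambda>x. ennreal ((min (u x) (real (Suc n)))^2)) \<in> borel_measurable M" for n
      using um by measurable
  qed
  finally show ?thesis .
qed

lemma law_facts:
  fixes h :: "'x \<Rightarrow> real^'p"
  assumes M: "prob_space M" and hm: "h \<in> borel_measurable M"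
  shows "prob_space (law M h)" and "sets (law M h) = sets borel"
    and "\<And>f. f \<in> borel_measurable borel \<Longrightarrow> (\<integral>\<^sup>+y. f y \<partial>law M h) = (\<integral>\<^sup>+x. f (h x) \<partial>M)"
    and "\<And>P. (\<And>x. x \<in> space M \<Longrightarrow> P (h x)) \<Longrightarrow> {y. P y} \<in> sets borel \<Longrightarrow> AE y in law M h. P y"
proof -
  show "prob_space (law M h)" unfolding law_def using prob_space.prob_space_distr[OF M hm] .
  show "sets (law M h) = sets borel" unfolding law_def by simp
  show "(\<integral>\<^sup>+y. f y \<partial>law M h) = (\<integral>\<^sup>+x. f (h x) \<partial>M)" if "f \<in> borel_measurable borel" for f
    unfolding law_def using that hm by (simp add: nn_integral_distr)
  show "AE y in law M h. P y" if "\<And>x. x \<in> space M \<Longrightarrow> P (h x)" "{y. P y} \<in> sets borel" for P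
    unfolding law_def
    using that by (subst AE_distr_iff[OF hm]) (auto intro: AE_I2)
qed

lemma bnd_integrable:
  fixes h :: "'a \<Rightarrow> real"
  assumes M: "prob_space M" and hm: "h \<in> borel_measurable M" and hb: "\<And>x. x \<in> space M \<Longrightarrow> \<bar>h x\<bar> \<le> B"
  shows "integrable M h"
proof (rule Bochner_Integration.integrable_bound[OF finite_measure.integrable_const[OF prob_space.finite_measure[OF M], of B] hm])
  show "AE x in M. norm (h x) \<le> norm B"
    using hb by (intro AE_I2) fastforce
qed

lemma nn_eq_int:
  fixes h :: "'a \<Rightarrow> real"
  assumes "integrable M h" "\<And>x. h x \<ge> 0"
  shows "(\<integral>\<^sup>+x. ennreal (h x) \<partial>M) = ennreal (\<integral>x. h x \<partial>M)"
  using assms by (intro nn_integral_eq_integral) auto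


theorem proposition6p3:
  fixes M :: "'x measure" and Q :: "'g::{topological_group_add, t2_space} measure"
    and act :: "'g \<Rightarrow> 'x \<Rightarrow> 'x" and \<theta> :: "'x \<Rightarrow> real^'p" and \<theta>0 :: "real^'p"
  assumes "prob_space M"
    and "compact (UNIV :: 'g set)"
    and "haar_prob Q"
    and "group_action act (space M)"
    and "(\<lambda>(x, g). \<theta> (act g x)) \<in> borel_measurable (M \<Otimes>\<^sub>M Q)"
    and "integrable (M \<Otimes>\<^sub>M Q) (\<lambda>(x, g). (norm (\<theta> (act g x)))^2)"
  defines "\<theta>G \<equiv> (\<lambda>x. \<integral>g. \<theta> (act g x) \<partial>Q)"
    and "EW \<equiv> (\<integral>\<^sup>+ g. wasserstein1 (law M (\<lambda>x. \<theta> (act g x))) (law M \<theta>) \<partial>Q)"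
  shows "ennreal \<bar>MSE M \<theta>G \<theta>0 - MSE M \<theta> \<theta>0
            + (\<integral>x. mat_trace (cov_matrix Q (\<lambda>g. \<theta> (act g x))) \<partial>M)\<bar>
         \<le> EW * (EW + 2 * ennreal (norm (Bias M \<theta> \<theta>0)) + 4 * sup_norm (space M) \<theta>)"
proof -
  note Mp = assms(1)
  interpret M: prob_space M by (rule Mp)
  have Qp: "prob_space Q" and sQ: "sets Q = sets borel" using assms(3) unfolding haar_prob_def by auto
  interpret Q: prob_space Q by (rule Qp)
  interpret MQ: pair_prob_space M Q
    using Mp Qp by (simp add: pair_prob_space_def pair_sigma_finite_def prob_space_imp_sigma_finite)
  have MQp: "prob_space (M \<Otimes>\<^sub>M Q)" using prob_space_pair[OF Mp Qp] .
  have spQ: "space Q = UNIV" using sets_eq_imp_space_eq[OF sQ] by simp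
  have actS: "\<And>g x. x \<in> space M \<Longrightarrow> act g x \<in> space M"
    and act0: "\<And>x. x \<in> space M \<Longrightarrow> act 0 x = x"
    using assms(4) unfolding group_action_def by auto
  define T where "T = (\<lambda>z. \<theta> (act (snd z) (fst z)))"
  have Tm: "T \<in> borel_measurable (M \<Otimes>\<^sub>M Q)"
    using assms(5) unfolding T_def by (simp add: case_prod_beta')
  have sec: "(\<lambda>x. \<theta> (act g x)) \<in> borel_measurable M" for g
    using measurable_Pair1[OF Tm, of g] spQ by (simp add: T_def)
  have sec2: "(\<lambda>g. \<theta> (act g x)) \<in> borel_measurable Q" if "x \<in> space M" for x
    using measurable_Pair2[OF Tm that] by (simp add: T_def)
  have thetam: "\<theta> \<in> borel_measurable M"
    using sec[of 0] by (rule measurable_cong[THEN iffD1, rotated]) (simp add: act0)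
  have hcont: "continuous_on UNIV (\<lambda>v::real^'p. (norm (v - \<theta>0))^2)"
    by (intro continuous_intros)
  have hbor: "(\<lambda>v::real^'p. (norm (v - \<theta>0))^2) \<in> borel_measurable borel"
    by (rule borel_measurable_continuous_onI[OF hcont])
  define f where "f = (\<lambda>x g. (norm (\<theta> (act g x) - \<theta>0))^2)"
  have fm: "case_prod f \<in> borel_measurable (M \<Otimes>\<^sub>M Q)"
    using meas_cont[OF hcont Tm] unfolding f_def T_def by (simp add: case_prod_beta')
  have fi: "integrable (M \<Otimes>\<^sub>M Q) (case_prod f)"
  proof (rule Bochner_Integration.integrable_bound[of _ "\<lambda>z. 2 * (case z of (x, g) \<Rightarrow> (norm (\<theta> (act g x)))^2) + 2 * (norm \<theta>0)^2"])
    show "integrable (M \<Otimes>\<^sub>M Q) (\<lambda>z. 2 * (case z of (x, g) \<Rightarrow> (norm (\<theta> (act g x)))^2) + 2 * (norm \<theta>0)^2)"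
      using assms(6) by (intro Bochner_Integration.integrable_add Bochner_Integration.integrable_mult_right finite_measure.integrable_const[OF prob_space.finite_measure[OF MQp]])
    show "case_prod f \<in> borel_measurable (M \<Otimes>\<^sub>M Q)" by (rule fm)
    show "AE z in M \<Otimes>\<^sub>M Q. norm (case_prod f z) \<le> norm (2 * (case z of (x, g) \<Rightarrow> (norm (\<theta> (act g x)))^2) + 2 * (norm \<theta>0)^2)"
      by (rule AE_I2) (auto simp: f_def sq_bound)
  qed
  have fpos: "f x g \<ge> 0" for x g by (simp add: f_def)
  have AEx: "AE x in M. integrable Q (\<lambda>g. (norm (\<theta> (act g x)))^2)"
    using MQ.AE_integrable_fst[of "\<lambda>x g. (norm (\<theta> (act g x)))^2"] assms(6) by simp
  have Phii: "integrable M (\<lambda>x. \<integral>g. f x g \<partial>Q)"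
    using MQ.integrable_fst[OF fi] .
  have Psii: "integrable Q (\<lambda>g. \<integral>x. f x g \<partial>M)"
    using MQ.integrable_snd[OF fi] .
  have Fub: "(\<integral>g. (\<integral>x. f x g \<partial>M) \<partial>Q) = (\<integral>x. (\<integral>g. f x g \<partial>Q) \<partial>M)"
    using MQ.Fubini_integral[OF fi] .
  have thGm: "\<theta>G \<in> borel_measurable M"
    unfolding \<theta>G_def using Q.borel_measurable_lebesgue_integral[of "\<lambda>x g. \<theta> (act g x)" M] assms(5) by simp
  define tc where "tc = (\<lambda>x. mat_trace (cov_matrix Q (\<lambda>g. \<theta> (act g x))))"
  have tc_eq: "tc x = (\<Sum>i\<in>UNIV. \<integral>g. (\<theta> (act g x) $ i - \<theta>G x $ i) * (\<theta> (act g x) $ i - \<theta>G x $ i) \<partial>Q)" for x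
    unfolding tc_def mat_trace_def cov_matrix_def \<theta>G_def by simp
  have tcm: "tc \<in> borel_measurable M"
  proof -
    have "(\<lambda>x. \<integral>g. (\<theta> (act g x) $ i - \<theta>G x $ i) * (\<theta> (act g x) $ i - \<theta>G x $ i) \<partial>Q) \<in> borel_measurable M" for i
    proof -
      have a: "(\<lambda>z. T z $ i) \<in> borel_measurable (M \<Otimes>\<^sub>M Q)" by (rule vec_nth_meas[OF Tm])
      have b: "(\<lambda>z. \<theta>G (fst z) $ i) \<in> borel_measurable (M \<Otimes>\<^sub>M Q)"
        by (rule vec_nth_meas) (rule measurable_comp[OF measurable_fst thGm, unfolded comp_def])
      have "(\<lambda>z. (T z $ i - \<theta>G (fst z) $ i) * (T z $ i - \<theta>G (fst z) $ i)) \<in> borel_measurable (M \<Otimes>\<^sub>M Q)"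
        using a b by (intro borel_measurable_times borel_measurable_diff)
      then have "case_prod (\<lambda>x g. (\<theta> (act g x) $ i - \<theta>G x $ i) * (\<theta> (act g x) $ i - \<theta>G x $ i)) \<in> borel_measurable (M \<Otimes>\<^sub>M Q)"
        unfolding T_def by (simp add: case_prod_beta')
      then show ?thesis by (rule Q.borel_measurable_lebesgue_integral)
    qed
    then show ?thesis unfolding tc_eq by (rule borel_measurable_sum)
  qed
  have tcpos: "tc x \<ge> 0" for x
    unfolding tc_eq by (intro sum_nonneg integral_nonneg_AE AE_I2) simp
  have decomp: "AE x in M. (\<integral>g. f x g \<partial>Q) = (norm (\<theta>G x - \<theta>0))^2 + tc x"
    using AEx
  proof (rule AE_mp[OF _ AE_I2], intro impI)
    fix x assume x: "x \<in> space M" and int: "integrable Q (\<lambda>g. (norm (\<theta> (act g x)))^2)"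
    show "(\<integral>g. f x g \<partial>Q) = (norm (\<theta>G x - \<theta>0))^2 + tc x"
      using var_decomp[OF Qp sec2[OF x] int, of \<theta>0] unfolding f_def \<theta>G_def tc_def by simp
  qed
  have e2m: "(\<lambda>x. (norm (\<theta>G x - \<theta>0))^2) \<in> borel_measurable M"
    using meas_cont[OF hcont thGm] .
  have e2i: "integrable M (\<lambda>x. (norm (\<theta>G x - \<theta>0))^2)"
  proof (rule Bochner_Integration.integrable_bound[OF Phii e2m])
    show "AE x in M. norm ((norm (\<theta>G x - \<theta>0))^2) \<le> norm (\<integral>g. f x g \<partial>Q)"
      using decomp by eventually_elim (use tcpos in auto)
  qed
  have tci: "integrable M tc"
  proof (rule Bochner_Integration.integrable_bound[OF Phii tcm])
    show "AE x in M. norm (tc x) \<le> norm (\<integral>g. f x g \<partial>Q)"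
      using decomp by eventually_elim (use tcpos in auto)
  qed
  have Phim: "(\<lambda>x. \<integral>g. f x g \<partial>Q) \<in> borel_measurable M"
    using Phii by (rule borel_measurable_integrable)
  have I1: "MSE M \<theta>G \<theta>0 + (\<integral>x. tc x \<partial>M) = (\<integral>x. (\<integral>g. f x g \<partial>Q) \<partial>M)"
  proof -
    have "MSE M \<theta>G \<theta>0 + (\<integral>x. tc x \<partial>M) = (\<integral>x. (norm (\<theta>G x - \<theta>0))^2 + tc x \<partial>M)"
      unfolding MSE_def using e2i tci by (rule Bochner_Integration.integral_add[symmetric])
    also have "\<dots> = (\<integral>x. (\<integral>g. f x g \<partial>Q) \<partial>M)"
      using e2m tcm Phim decomp by (intro integral_cong_AE) auto
    finally show ?thesis .
  qed
  define \<Delta> where "\<Delta> = (\<lambda>g. (\<integral>x. f x g \<partial>M) - MSE M \<theta> \<theta>0)"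
  have Deli: "integrable Q \<Delta>"
    unfolding \<Delta>_def using Psii by (intro Bochner_Integration.integrable_diff Q.integrable_const)
  have LHS: "MSE M \<theta>G \<theta>0 - MSE M \<theta> \<theta>0 + (\<integral>x. mat_trace (cov_matrix Q (\<lambda>g. \<theta> (act g x))) \<partial>M)
      = (\<integral>g. \<Delta> g \<partial>Q)"
  proof -
    have "(\<integral>g. \<Delta> g \<partial>Q) = (\<integral>g. (\<integral>x. f x g \<partial>M) \<partial>Q) - (\<integral>g. MSE M \<theta> \<theta>0 \<partial>Q)"
      unfolding \<Delta>_def using Psii Q.integrable_const by (rule Bochner_Integration.integral_diff)
    also have "(\<integral>g. MSE M \<theta> \<theta>0 \<partial>Q) = MSE M \<theta> \<theta>0" by (simp add: Q.prob_space)
    finally show ?thesis using I1 Fub unfolding tc_def by simp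
  qed
  define W where "W = (\<lambda>g. wasserstein1 (law M (\<lambda>x. \<theta> (act g x))) (law M \<theta>))"
  have EWW: "EW = (\<integral>\<^sup>+g. W g \<partial>Q)" unfolding EW_def W_def ..
  have lawg: "prob_space (law M (\<lambda>x. \<theta> (act g x)))" "sets (law M (\<lambda>x. \<theta> (act g x))) = sets borel" for g
    using law_facts(1,2)[OF Mp sec] by auto
  have law0: "prob_space (law M \<theta>)" "sets (law M \<theta>) = sets borel"
    using law_facts(1,2)[OF Mp thetam] by auto
  have nng: "(\<integral>\<^sup>+y. ennreal (k y) \<partial>law M (\<lambda>x. \<theta> (act g x))) = (\<integral>\<^sup>+x. ennreal (k (\<theta> (act g x))) \<partial>M)"
    if "k \<in> borel_measurable borel" for k g
    using law_facts(3)[OF Mp sec, of "\<lambda>y. ennreal (k y)"] measurable_compose[OF that measurable_ennreal] by simp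
  have nn0: "(\<integral>\<^sup>+y. ennreal (k y) \<partial>law M \<theta>) = (\<integral>\<^sup>+x. ennreal (k (\<theta> x)) \<partial>M)"
    if "k \<in> borel_measurable borel" for k
    using law_facts(3)[OF Mp thetam, of "\<lambda>y. ennreal (k y)"] measurable_compose[OF that measurable_ennreal] by simp
  have MSEdef: "MSE M \<theta> \<theta>0 = (\<integral>x. (norm (\<theta> x - \<theta>0))^2 \<partial>M)" unfolding MSE_def ..
  have secf: "(\<lambda>x. f x g) \<in> borel_measurable M" for g
    unfolding f_def using meas_cont[OF hcont sec] .
  have th0f: "(\<lambda>x. (norm (\<theta> x - \<theta>0))^2) \<in> borel_measurable M"
    using meas_cont[OF hcont thetam] .
  show ?thesis
  proof (cases "sup_norm (space M) \<theta> = \<top>")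
    case False
    then obtain b where b: "sup_norm (space M) \<theta> = ennreal b" "0 \<le> b"
      by (cases "sup_norm (space M) \<theta>") auto
    have bnd: "norm (\<theta> x) \<le> b" if "x \<in> space M" for x
    proof -
      have "ennreal (norm (\<theta> x)) \<le> sup_norm (space M) \<theta>"
        unfolding sup_norm_def by (rule SUP_upper) (rule that)
      then show ?thesis using b ennreal_le_iff by simp
    qed
    have bnd2: "norm (\<theta> (act g x)) \<le> b" if "x \<in> space M" for x g
      using bnd[OF actS[OF that]] .
    have thi: "integrable M \<theta>"
    proof (rule Bochner_Integration.integrable_bound[OF M.integrable_const[of b] thetam])
      show "AE x in M. norm (\<theta> x) \<le> norm b" using bnd by (intro AE_I2) force
    qed
    define m where "m = (\<integral>x. \<theta> x \<partial>M)"
    have normm: "norm m \<le> b"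
    proof -
      have "norm m \<le> (\<integral>x. norm (\<theta> x) \<partial>M)" unfolding m_def by (rule integral_norm_bound)
      also have "\<dots> \<le> (\<integral>x. b \<partial>M)"
        using integrable_norm[OF thi] bnd by (intro integral_mono) auto
      also have "\<dots> = b" by (simp add: M.prob_space)
      finally show ?thesis .
    qed
    have Bias_eq: "Bias M \<theta> \<theta>0 = m - \<theta>0" unfolding Bias_def m_def ..
    define C where "C = 4 * b + 2 * norm (m - \<theta>0)"
    have C0: "C \<ge> 0" unfolding C_def using b by simp
    have sqb: "\<bar>(norm (v - \<theta>0))^2\<bar> \<le> (b + norm \<theta>0)^2" if "norm v \<le> b" for v :: "real^'p"
    proof -
      have "norm (v - \<theta>0) \<le> b + norm \<theta>0" using norm_triangle_ineq4[of v \<theta>0] that by simp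
      then show ?thesis by (simp add: power_mono)
    qed
    have fgi: "integrable M (\<lambda>x. f x g)" for g
      using bnd_integrable[OF Mp secf] sqb bnd2 unfolding f_def by blast
    have f0i: "integrable M (\<lambda>x. (norm (\<theta> x - \<theta>0))^2)"
      using bnd_integrable[OF Mp th0f] sqb bnd by blast
    have pergen: "ennreal \<bar>\<Delta> g\<bar> \<le> ennreal C * W g \<and> (C > 0 \<longrightarrow> ennreal (\<bar>\<Delta> g\<bar> / C) \<le> W g)" for g
    proof -
      have K: "cball (0::real^'p) b \<in> sets borel" by (rule borel_closed[OF closed_cball])
      have Kmu: "AE y in law M (\<lambda>x. \<theta> (act g x)). y \<in> cball 0 b"
        using K bnd2 by (intro law_facts(4)[OF Mp sec]) auto
      have Knu: "AE y in law M \<theta>. y \<in> cball 0 b"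
        using K bnd by (intro law_facts(4)[OF Mp thetam]) auto
      have Lip: "(norm (a - \<theta>0))^2 \<le> (norm (b' - \<theta>0))^2 + C * dist a b'"
        if "a \<in> cball 0 b" "b' \<in> cball 0 b" for a b' :: "real^'p"
        using lip_sq[of a b b' m \<theta>0] that normm unfolding C_def by simp
      have fin1: "(\<integral>\<^sup>+y. ennreal ((norm (y - \<theta>0))^2) \<partial>law M (\<lambda>x. \<theta> (act g x))) = ennreal (\<integral>x. f x g \<partial>M)"
        unfolding nng[OF hbor] using nn_eq_int[OF fgi] unfolding f_def by simp
      have fin2: "(\<integral>\<^sup>+y. ennreal ((norm (y - \<theta>0))^2) \<partial>law M \<theta>) = ennreal (MSE M \<theta> \<theta>0)"
        unfolding nn0[OF hbor] MSEdef using nn_eq_int[OF f0i] by simp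
      have a0: "(\<integral>x. f x g \<partial>M) \<ge> 0" by (intro integral_nonneg_AE AE_I2) (simp add: f_def)
      have c0: "MSE M \<theta> \<theta>0 \<ge> 0" unfolding MSEdef by (intro integral_nonneg_AE AE_I2) simp
      note WB = W_bound[OF lawg(1) law0(1) lawg(2) law0(2) hbor _ K Kmu Knu Lip C0 fin1 fin2 a0 c0]
      show ?thesis using WB unfolding \<Delta>_def W_def by simp
    qed
    have main: "ennreal \<bar>\<integral>g. \<Delta> g \<partial>Q\<bar> \<le> ennreal C * EW"
    proof (cases "C = 0")
      case True
      then have "\<Delta> g = 0" for g using pergen[of g] by simp
      then show ?thesis by simp
    next
      case False
      then have Cp: "C > 0" using C0 by simp
      have "ennreal \<bar>\<integral>g. \<Delta> g \<partial>Q\<bar> \<le> ennreal (\<integral>g. \<bar>\<Delta> g\<bar> \<partial>Q)"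
        by (intro ennreal_leI integral_abs_bound)
      also have "(\<integral>g. \<bar>\<Delta> g\<bar> \<partial>Q) = C * (\<integral>g. \<bar>\<Delta> g\<bar> / C \<partial>Q)"
        using Cp by simp
      also have "ennreal (C * (\<integral>g. \<bar>\<Delta> g\<bar> / C \<partial>Q)) = ennreal C * ennreal (\<integral>g. \<bar>\<Delta> g\<bar> / C \<partial>Q)"
        using Cp by (intro ennreal_mult) (auto intro!: integral_nonneg_AE)
      also have "ennreal (\<integral>g. \<bar>\<Delta> g\<bar> / C \<partial>Q) = (\<integral>\<^sup>+g. ennreal (\<bar>\<Delta> g\<bar> / C) \<partial>Q)"
        using Deli Cp by (intro nn_eq_int[symmetric]) auto
      also have "\<dots> \<le> (\<integral>\<^sup>+g. W g \<partial>Q)"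
        using pergen Cp by (intro nn_integral_mono) auto
      finally show ?thesis unfolding EWW by (simp add: mult_left_mono)
    qed
    have Ceq: "ennreal C = 2 * ennreal (norm (Bias M \<theta> \<theta>0)) + 4 * sup_norm (space M) \<theta>"
      unfolding C_def Bias_eq b(1) using b(2)
      by (simp add: ennreal_plus ennreal_mult add.commute)
    have "ennreal C * EW \<le> EW * (EW + 2 * ennreal (norm (Bias M \<theta> \<theta>0)) + 4 * sup_norm (space M) \<theta>)"
      unfolding Ceq by (simp add: mult.commute add.assoc mult_left_mono)
    then show ?thesis using main unfolding LHS by (rule order_trans[rotated])
  next
    case True
    show ?thesis
    proof (cases "EW = 0")
      case False
      then show ?thesis using True by (simp add: ennreal_mult_top)
    next
      case EW0: True
      define hR where "hR = (\<lambda>(n::nat) (v::real^'p). (min (norm (v - \<theta>0)) (real (Suc n)))^2)"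
      have hRc: "continuous_on UNIV (hR n)" for n unfolding hR_def by (intro continuous_intros)
      have hRb: "hR n \<in> borel_measurable borel" for n by (rule borel_measurable_continuous_onI[OF hRc])
      have hRpos: "hR n v \<ge> 0" for n v unfolding hR_def by simp
      have hRbd: "\<bar>hR n v\<bar> \<le> (real (Suc n))^2" for n v
        unfolding hR_def by (simp add: power_mono)
      define A where "A = (\<lambda>n g. \<integral>x. hR n (\<theta> (act g x)) \<partial>M)"
      define c where "c = (\<lambda>n. \<integral>x. hR n (\<theta> x) \<partial>M)"
      have Ai: "integrable M (\<lambda>x. hR n (\<theta> (act g x)))" for n g
        using bnd_integrable[OF Mp meas_cont[OF hRc sec] hRbd] .
      have ci: "integrable M (\<lambda>x. hR n (\<theta> x))" for n
        using bnd_integrable[OF Mp meas_cont[OF hRc thetam] hRbd] .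
      have Tsw: "(\<lambda>z. \<theta> (act (fst z) (snd z))) \<in> borel_measurable (Q \<Otimes>\<^sub>M M)"
        using measurable_pair_swap_iff[of "\<lambda>z. \<theta> (act (fst z) (snd z))" Q M borel] Tm
        unfolding T_def by (simp add: case_prod_beta')
      have Am: "A n \<in> borel_measurable Q" for n
      proof -
        have "case_prod (\<lambda>g x. hR n (\<theta> (act g x))) \<in> borel_measurable (Q \<Otimes>\<^sub>M M)"
          using meas_cont[OF hRc Tsw] by (simp add: case_prod_beta')
        then show ?thesis unfolding A_def by (rule M.borel_measurable_lebesgue_integral)
      qed
      have perg: "ennreal (\<bar>A n g - c n\<bar> / (2 * real (Suc n))) \<le> W g" for n g
      proof -
        have Lip: "hR n a \<le> hR n b' + (2 * real (Suc n)) * dist a b'" if "a \<in> UNIV" "b' \<in> UNIV" for a b'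
          unfolding hR_def by (rule lip_trunc) simp
        have fin1: "(\<integral>\<^sup>+y. ennreal (hR n y) \<partial>law M (\<lambda>x. \<theta> (act g x))) = ennreal (A n g)"
          unfolding nng[OF hRb] A_def using nn_eq_int[OF Ai hRpos] .
        have fin2: "(\<integral>\<^sup>+y. ennreal (hR n y) \<partial>law M \<theta>) = ennreal (c n)"
          unfolding nn0[OF hRb] c_def using nn_eq_int[OF ci hRpos] .
        have a0: "A n g \<ge> 0" unfolding A_def by (intro integral_nonneg_AE AE_I2 hRpos)
        have c0: "c n \<ge> 0" unfolding c_def by (intro integral_nonneg_AE AE_I2 hRpos)
        have "ennreal (\<bar>A n g - c n\<bar> / (2 * real (Suc n))) \<le> wasserstein1 (law M (\<lambda>x. \<theta> (act g x))) (law M \<theta>)"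
          by (rule W_bound(2)[OF lawg(1) law0(1) lawg(2) law0(2) hRb hRpos sets.top AE_I2 AE_I2 Lip _ fin1 fin2 a0 c0]) auto
        then show ?thesis unfolding W_def .
      qed
      have AEn: "AE g in Q. A n g = c n" for n
      proof -
        have mm: "(\<lambda>g. ennreal (\<bar>A n g - c n\<bar> / (2 * real (Suc n)))) \<in> borel_measurable Q"
          using Am[of n] by measurable
        have "(\<integral>\<^sup>+g. ennreal (\<bar>A n g - c n\<bar> / (2 * real (Suc n))) \<partial>Q) \<le> (\<integral>\<^sup>+g. W g \<partial>Q)"
          using perg by (intro nn_integral_mono) auto
        then have "(\<integral>\<^sup>+g. ennreal (\<bar>A n g - c n\<bar> / (2 * real (Suc n))) \<partial>Q) = 0"
          using EW0 unfolding EWW by simp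
        then have "AE g in Q. ennreal (\<bar>A n g - c n\<bar> / (2 * real (Suc n))) = 0"
          using nn_integral_0_iff_AE[OF mm] by simp
        then show ?thesis
        proof eventually_elim
          case (elim g)
          then have "\<bar>A n g - c n\<bar> / (2 * real (Suc n)) \<le> 0" by (simp add: ennreal_eq_0_iff)
          then have "\<bar>A n g - c n\<bar> \<le> 0" by (simp add: divide_le_0_iff)
          then show ?case by simp
        qed
      qed
      have AEall: "AE g in Q. \<forall>n. A n g = c n" using AEn by (simp add: AE_all_countable)
      have ncont: "continuous_on UNIV (\<lambda>v::real^'p. norm (v - \<theta>0))" by (intro continuous_intros)
      have Dz: "AE g in Q. \<Delta> g = 0"
        using AEall
      proof eventually_elim
        case (elim g)
        have u1: "(\<lambda>x. norm (\<theta> (act g x) - \<theta>0)) \<in> borel_measurable M" using meas_cont[OF ncont sec] .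
        have u0: "(\<lambda>x. norm (\<theta> x - \<theta>0)) \<in> borel_measurable M" using meas_cont[OF ncont thetam] .
        have "(\<integral>\<^sup>+x. ennreal ((norm (\<theta> (act g x) - \<theta>0))^2) \<partial>M)
            = (SUP n. \<integral>\<^sup>+x. ennreal ((min (norm (\<theta> (act g x) - \<theta>0)) (real (Suc n)))^2) \<partial>M)"
          by (rule trunc_MCT[OF u1]) simp
        also have "\<dots> = (SUP n. ennreal (A n g))"
        proof (rule SUP_cong[OF refl])
          fix n
          show "(\<integral>\<^sup>+x. ennreal ((min (norm (\<theta> (act g x) - \<theta>0)) (real (Suc n)))^2) \<partial>M) = ennreal (A n g)"
            using nn_eq_int[OF Ai[of n g] hRpos] by (simp add: hR_def A_def)
        qed
        also have "\<dots> = (SUP n. ennreal (c n))" using elim by simp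
        also have "\<dots> = (SUP n. \<integral>\<^sup>+x. ennreal ((min (norm (\<theta> x - \<theta>0)) (real (Suc n)))^2) \<partial>M)"
        proof (rule SUP_cong[OF refl])
          fix n
          show "ennreal (c n) = (\<integral>\<^sup>+x. ennreal ((min (norm (\<theta> x - \<theta>0)) (real (Suc n)))^2) \<partial>M)"
            using nn_eq_int[OF ci[of n] hRpos] by (simp add: hR_def c_def)
        qed
        also have "\<dots> = (\<integral>\<^sup>+x. ennreal ((norm (\<theta> x - \<theta>0))^2) \<partial>M)"
          by (rule trunc_MCT[OF u0, symmetric]) simp
        finally have eq: "(\<integral>\<^sup>+x. ennreal ((norm (\<theta> (act g x) - \<theta>0))^2) \<partial>M) = (\<integral>\<^sup>+x. ennreal ((norm (\<theta> x - \<theta>0))^2) \<partial>M)" .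
        have "(\<integral>x. f x g \<partial>M) = enn2real (\<integral>\<^sup>+x. ennreal (f x g) \<partial>M)"
          using secf by (rule integral_eq_nn_integral) (simp add: f_def)
        also have "\<dots> = enn2real (\<integral>\<^sup>+x. ennreal ((norm (\<theta> x - \<theta>0))^2) \<partial>M)"
          using eq by (simp add: f_def)
        also have "\<dots> = MSE M \<theta> \<theta>0"
          unfolding MSEdef using th0f by (rule integral_eq_nn_integral[symmetric]) simp
        finally show ?case unfolding \<Delta>_def by simp
      qed
      have "(\<integral>g. \<Delta> g \<partial>Q) = 0" using Dz by (rule integral_eq_zero_AE)
      then show ?thesis unfolding LHS by simp
    qed
  qed
qed

end
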